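(* Let $\mathcal{H}$ be a Hilbert space with inner product $[\cdot,\cdot]$, let $K(\mathcal{H})$ be the $C^*$-algebra of compact operators on $\mathcal{H}$, and let $\mathcal{E}$ be a Hilbert $K(\mathcal{H})$-module. Let $x, y \in \mathcal{E}$. Then the following are equivalent: (i) $x \parallel y$; (ii) there exists a unit vector $\xi \in \mathcal{H}$ such that $$\big|[\langle x, x\rangle \langle x, y\rangle \xi, \xi]\big| = \|x\|^3\|y\|.$$
   Context: A (left) Hilbert $K(\mathcal{H})$-module is a left $K(\mathcal{H})$-module $\mathcal{E}$ with a $K(\mathcal{H})$-valued inner product $\langle\cdot,\cdot\rangle$, linear in the first variable and conjugate linear in the second, satisfying $\langle x,x\rangle\ge 0$ with equality iff $x=0$, $\langle ax,y\rangle = a\langle x,y\rangle$ and $\langle x,y\rangle^*=\langle y,x\rangle$, and complete for the norm $\|x\|=\|\langle x,x\rangle\|^{1/2}$. For elements $x,y$ of a normed space, $x$ is norm-parallel to $y$, written $x\parallel y$, if $\|x+\lambda y\| = \|x\|+\|y\|$ for some $\lambda\in\mathbb{T}=\{\alpha\in\mathbb{C}: |\alpha|=1\}$. *)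

theory Defs
  imports Complex_Main
begin

definition pre_hilbert_space ::
  "(complex \<Rightarrow> 'h::ab_group_add \<Rightarrow> 'h) \<Rightarrow> ('h \<Rightarrow> 'h \<Rightarrow> complex) \<Rightarrow> bool" where
  "pre_hilbert_space sc ip \<longleftrightarrow>
     vector_space sc \<and>
     (\<forall>u v w. ip (u + v) w = ip u w + ip v w) \<and>
     (\<forall>c u v. ip (sc c u) v = c * ip u v) \<and>
     (\<forall>u v. ip v u = cnj (ip u v)) \<and>
     (\<forall>u. Im (ip u u) = 0 \<and> 0 \<le> Re (ip u u)) \<and>
     (\<forall>u. ip u u = 0 \<longleftrightarrow> u = 0)"

definition ipnorm :: "('h \<Rightarrow> 'h \<Rightarrow> complex) \<Rightarrow> 'h \<Rightarrow> real" where
  "ipnorm ip u = sqrt (Re (ip u u))"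

definition cauchy_wrt :: "('a::ab_group_add \<Rightarrow> real) \<Rightarrow> (nat \<Rightarrow> 'a) \<Rightarrow> bool" where
  "cauchy_wrt nrm X \<longleftrightarrow> (\<forall>e>0. \<exists>N. \<forall>m\<ge>N. \<forall>k\<ge>N. nrm (X m - X k) < e)"

definition converges_wrt :: "('a::ab_group_add \<Rightarrow> real) \<Rightarrow> (nat \<Rightarrow> 'a) \<Rightarrow> 'a \<Rightarrow> bool" where
  "converges_wrt nrm X l \<longleftrightarrow> (\<forall>e>0. \<exists>N. \<forall>k\<ge>N. nrm (X k - l) < e)"

definition complete_wrt :: "('a::ab_group_add \<Rightarrow> real) \<Rightarrow> bool" where
  "complete_wrt nrm \<longleftrightarrow> (\<forall>X. cauchy_wrt nrm X \<longrightarrow> (\<exists>l. converges_wrt nrm X l))"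

definition hilbert_space ::
  "(complex \<Rightarrow> 'h::ab_group_add \<Rightarrow> 'h) \<Rightarrow> ('h \<Rightarrow> 'h \<Rightarrow> complex) \<Rightarrow> bool" where
  "hilbert_space sc ip \<longleftrightarrow> pre_hilbert_space sc ip \<and> complete_wrt (ipnorm ip)"

definition bounded_op ::
  "(complex \<Rightarrow> 'h::ab_group_add \<Rightarrow> 'h) \<Rightarrow> ('h \<Rightarrow> 'h \<Rightarrow> complex) \<Rightarrow> ('h \<Rightarrow> 'h) \<Rightarrow> bool" where
  "bounded_op sc ip T \<longleftrightarrow>
     (\<forall>u v. T (u + v) = T u + T v) \<and> (\<forall>c u. T (sc c u) = sc c (T u)) \<and>
     (\<exists>K. \<forall>u. ipnorm ip (T u) \<le> K * ipnorm ip u)"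

definition opnorm :: "('h \<Rightarrow> 'h \<Rightarrow> complex) \<Rightarrow> ('h \<Rightarrow> 'h) \<Rightarrow> real" where
  "opnorm ip T = Sup {ipnorm ip (T u) | u. ipnorm ip u \<le> 1}"

definition compact_op ::
  "(complex \<Rightarrow> 'h::ab_group_add \<Rightarrow> 'h) \<Rightarrow> ('h \<Rightarrow> 'h \<Rightarrow> complex) \<Rightarrow> ('h \<Rightarrow> 'h) \<Rightarrow> bool" where
  "compact_op sc ip T \<longleftrightarrow> bounded_op sc ip T \<and>
     (\<forall>X. (\<exists>B. \<forall>n. ipnorm ip (X n) \<le> B) \<longrightarrow>
          (\<exists>(r::nat \<Rightarrow> nat) l. strict_mono r \<and> converges_wrt (ipnorm ip) (\<lambda>n. T (X (r n))) l))"

definition positive_op :: "('h \<Rightarrow> 'h \<Rightarrow> complex) \<Rightarrow> ('h \<Rightarrow> 'h) \<Rightarrow> bool" where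
  "positive_op ip T \<longleftrightarrow> (\<forall>u. Im (ip (T u) u) = 0 \<and> 0 \<le> Re (ip (T u) u))"

definition is_adjoint :: "('h \<Rightarrow> 'h \<Rightarrow> complex) \<Rightarrow> ('h \<Rightarrow> 'h) \<Rightarrow> ('h \<Rightarrow> 'h) \<Rightarrow> bool" where
  "is_adjoint ip T S \<longleftrightarrow> (\<forall>u v. ip (T u) v = ip u (S v))"

definition module_norm :: "('h \<Rightarrow> 'h \<Rightarrow> complex) \<Rightarrow> ('e \<Rightarrow> 'e \<Rightarrow> ('h \<Rightarrow> 'h)) \<Rightarrow> 'e \<Rightarrow> real" where
  "module_norm ip ipE x = sqrt (opnorm ip (ipE x x))"

definition hilbert_KH_module ::
  "(complex \<Rightarrow> 'h::ab_group_add \<Rightarrow> 'h) \<Rightarrow> ('h \<Rightarrow> 'h \<Rightarrow> complex) \<Rightarrow>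
   (complex \<Rightarrow> 'e::ab_group_add \<Rightarrow> 'e) \<Rightarrow> (('h \<Rightarrow> 'h) \<Rightarrow> 'e \<Rightarrow> 'e) \<Rightarrow>
   ('e \<Rightarrow> 'e \<Rightarrow> ('h \<Rightarrow> 'h)) \<Rightarrow> bool" where
  "hilbert_KH_module sc ip scE act ipE \<longleftrightarrow>
     vector_space scE \<and>
     \<comment> \<open>left K(H)-module structure, compatible with complex scalars\<close>
     (\<forall>a b x. compact_op sc ip a \<longrightarrow> compact_op sc ip b \<longrightarrow> act (a \<circ> b) x = act a (act b x)) \<and>
     (\<forall>a b x. compact_op sc ip a \<longrightarrow> compact_op sc ip b \<longrightarrow>
        act (\<lambda>u. a u + b u) x = act a x + act b x) \<and>
     (\<forall>a x y. compact_op sc ip a \<longrightarrow> act a (x + y) = act a x + act a y) \<and>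
     (\<forall>a c x. compact_op sc ip a \<longrightarrow>
        scE c (act a x) = act (\<lambda>u. sc c (a u)) x \<and> scE c (act a x) = act a (scE c x)) \<and>
     \<comment> \<open>K(H)-valued inner product\<close>
     (\<forall>x y. compact_op sc ip (ipE x y)) \<and>
     (\<forall>x y z. ipE (x + y) z = (\<lambda>u. ipE x z u + ipE y z u)) \<and>
     (\<forall>c x y. ipE (scE c x) y = (\<lambda>u. sc c (ipE x y u))) \<and>
     (\<forall>a x y. compact_op sc ip a \<longrightarrow> ipE (act a x) y = a \<circ> ipE x y) \<and>
     (\<forall>x y. is_adjoint ip (ipE x y) (ipE y x)) \<and>
     (\<forall>x. positive_op ip (ipE x x)) \<and>
     (\<forall>x. ipE x x = (\<lambda>u. 0) \<longleftrightarrow> x = 0) \<and>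
     complete_wrt (module_norm ip ipE)"

definition norm_parallel :: "(complex \<Rightarrow> 'e::ab_group_add \<Rightarrow> 'e) \<Rightarrow> ('e \<Rightarrow> real) \<Rightarrow> 'e \<Rightarrow> 'e \<Rightarrow> bool" where
  "norm_parallel sc nrm x y \<longleftrightarrow> (\<exists>t. cmod t = 1 \<and> nrm (x + sc t y) = nrm x + nrm y)"

end

theory Submission
  imports Defs
begin

lemma form_expand:
  fixes s :: "complex \<Rightarrow> 'a::ab_group_add \<Rightarrow> 'a" and f :: "'a \<Rightarrow> 'a \<Rightarrow> complex"
  assumes add: "\<And>u v w. f (u+v) w = f u w + f v w"
    and sc: "\<And>c u v. f (s c u) v = c * f u v"
    and herm: "\<And>u v. f v u = cnj (f u v)"
  shows "Re (f (u + s c v) (u + s c v)) = Re (f u u) + 2 * Re (cnj c * f u v) + (cmod c)^2 * Re (f v v)"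
proof -
  have addr: "f u (v + w) = f u v + f u w" for u v w
    using herm[of u "v+w"] herm[of u v] herm[of u w] add[of v w u] by simp
  have scr: "f u (s c v) = cnj c * f u v" for u v c
    using herm[of u "s c v"] herm[of u v] sc[of c v u] by simp
  have e: "f (u + s c v) (u + s c v) = f u u + cnj c * f u v + c * cnj (f u v) + c * cnj c * f v v"
    by (simp add: add addr sc scr herm[of u v] algebra_simps)
  have r1: "Re (c * cnj (f u v)) = Re (cnj c * f u v)"
    by simp
  have r2: "c * cnj c = complex_of_real ((cmod c)^2)"
    by (rule complex_norm_square[symmetric])
  have r3: "Re (complex_of_real ((cmod c)^2) * f v v) = (cmod c)^2 * Re (f v v)"
    by simp
  show ?thesis unfolding e using r1 r2 r3 by (simp add: mult.assoc[symmetric])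
qed

lemma form_CS:
  fixes s :: "complex \<Rightarrow> 'a::ab_group_add \<Rightarrow> 'a" and f :: "'a \<Rightarrow> 'a \<Rightarrow> complex"
  assumes add: "\<And>u v w. f (u+v) w = f u w + f v w"
    and sc: "\<And>c u v. f (s c u) v = c * f u v"
    and herm: "\<And>u v. f v u = cnj (f u v)"
    and pos: "\<And>u. Im (f u u) = 0 \<and> 0 \<le> Re (f u u)"
  shows "(cmod (f u v))^2 \<le> Re (f u u) * Re (f v v)"
proof -
  define P where "P = Re (f u u)"
  define Q where "Q = (cmod (f u v))^2"
  define R where "R = Re (f v v)"
  have key: "0 \<le> P - 2*t*Q + t^2 * Q * R" for t :: real
  proof -
    define c where "c = - (complex_of_real t * f u v)"
    have "0 \<le> Re (f (u + s c v) (u + s c v))" using pos by blast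
    also have "\<dots> = P + 2 * Re (cnj c * f u v) + (cmod c)^2 * R"
      unfolding P_def R_def using form_expand[of f s, OF add sc herm] by blast
    also have "Re (cnj c * f u v) = - t * Q"
    proof -
      have q: "cnj (f u v) * f u v = complex_of_real Q" unfolding Q_def
        using complex_norm_square[of "f u v"] by (simp add: mult.commute)
      show ?thesis unfolding c_def by (simp add: mult.assoc q)
    qed
    also have "(cmod c)^2 = t^2 * Q"
      unfolding c_def Q_def by (simp add: norm_mult power_mult_distrib)
    finally show ?thesis by (simp add: algebra_simps)
  qed
  have P0: "P \<ge> 0" and R0: "R \<ge> 0" using pos unfolding P_def R_def by auto
  have Q0: "Q \<ge> 0" unfolding Q_def by simp
  show ?thesis
  proof (cases "R > 0")
    case True
    have "0 \<le> P - 2*(1/R)*Q + (1/R)^2 * Q * R" by (rule key)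
    also have "\<dots> = P - Q/R" using True by (simp add: field_simps power2_eq_square)
    finally have "Q/R \<le> P" by simp
    then show ?thesis using True unfolding P_def[symmetric] Q_def[symmetric] R_def[symmetric]
      by (simp add: divide_le_eq mult.commute)
  next
    case False
    then have R: "R = 0" using R0 by simp
    have "Q = 0"
    proof (rule ccontr)
      assume "Q \<noteq> 0"
      then have "Q > 0" using Q0 by simp
      have "0 \<le> P - 2*((P+1)/Q)*Q" using key[of "(P+1)/Q"] R by simp
      then show False using \<open>Q > 0\<close> P0 by simp
    qed
    then show ?thesis unfolding P_def[symmetric] Q_def[symmetric] R_def[symmetric] using P0 R0 by simp
  qed
qed


locale phs =
  fixes sc :: "complex \<Rightarrow> 'h::ab_group_add \<Rightarrow> 'h" and ip :: "'h \<Rightarrow> 'h \<Rightarrow> complex"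
  assumes phs: "pre_hilbert_space sc ip"

sublocale phs \<subseteq> M: module sc
  using phs unfolding pre_hilbert_space_def module_iff_vector_space by simp

context phs
begin

lemma ip_add: "ip (u + v) w = ip u w + ip v w"
  using phs unfolding pre_hilbert_space_def by blast

lemma ip_sc: "ip (sc c u) v = c * ip u v"
  using phs unfolding pre_hilbert_space_def by blast

lemma ip_herm: "ip v u = cnj (ip u v)"
  using phs unfolding pre_hilbert_space_def by blast

lemma ip_pos: "Im (ip u u) = 0 \<and> 0 \<le> Re (ip u u)"
  using phs unfolding pre_hilbert_space_def by blast

lemma ip_eq0: "ip u u = 0 \<longleftrightarrow> u = 0"
  using phs unfolding pre_hilbert_space_def by blast


lemma ip_add_right: "ip u (v + w) = ip u v + ip u w"
  using ip_herm[of u "v+w"] ip_herm[of u v] ip_herm[of u w] ip_add[of v w u] by simp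

lemma ip_sc_right: "ip u (sc c v) = cnj c * ip u v"
  using ip_herm[of u "sc c v"] ip_herm[of u v] ip_sc[of c v u] by simp

lemma ip_zero_left[simp]: "ip 0 v = 0"
  using ip_sc[of 0 0 v] by simp

lemma ip_zero_right[simp]: "ip v 0 = 0"
  using ip_sc_right[of v 0 0] by simp

lemma sc_minus_one: "sc (-1) u = - u"
  by simp

lemma ip_minus_left: "ip (- u) v = - ip u v"
  using ip_sc[of "-1" u v] by simp

lemma ip_minus_right: "ip v (- u) = - ip v u"
  using ip_sc_right[of v "-1" u] by simp

lemma ip_diff_left: "ip (u - w) v = ip u v - ip w v"
  using ip_add[of u "-w" v] ip_minus_left[of w v] by simp

lemma ip_diff_right: "ip v (u - w) = ip v u - ip v w"
  using ip_add_right[of v u "-w"] ip_minus_right[of v w] by simp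

lemma ipnorm_nonneg: "0 \<le> ipnorm ip u"
  using ip_pos[of u] unfolding ipnorm_def by simp

lemma ipnorm_sq: "(ipnorm ip u)^2 = Re (ip u u)"
  unfolding ipnorm_def using ip_pos[of u] by simp

lemma ip_self: "ip u u = complex_of_real ((ipnorm ip u)^2)"
  unfolding ipnorm_sq using ip_pos[of u] by (simp add: complex_eq_iff)

lemma ipnorm_eq0: "ipnorm ip u = 0 \<longleftrightarrow> u = 0"
  using ip_self[of u] ip_eq0[of u] by auto

lemma ipnorm_zero[simp]: "ipnorm ip 0 = 0"
  using ipnorm_eq0 by simp

lemma ip_CS: "cmod (ip u v) \<le> ipnorm ip u * ipnorm ip v"
proof -
  have "(cmod (ip u v))^2 \<le> Re (ip u u) * Re (ip v v)"
    by (rule form_CS[of ip sc, OF ip_add ip_sc ip_herm ip_pos])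
  also have "\<dots> = (ipnorm ip u * ipnorm ip v)^2" by (simp add: ipnorm_sq power_mult_distrib)
  finally show ?thesis by (rule power2_le_imp_le) (simp add: ipnorm_nonneg)
qed

lemma ipnorm_expand: "(ipnorm ip (u + sc c v))^2 = (ipnorm ip u)^2 + 2 * Re (cnj c * ip u v) + (cmod c)^2 * (ipnorm ip v)^2"
  unfolding ipnorm_sq by (rule form_expand[of ip sc, OF ip_add ip_sc ip_herm])

lemma ipnorm_sc: "ipnorm ip (sc c u) = cmod c * ipnorm ip u"
proof -
  have "(ipnorm ip (sc c u))^2 = (cmod c * ipnorm ip u)^2"
    using ipnorm_expand[of 0 c u] by (simp add: power_mult_distrib)
  then show ?thesis using ipnorm_nonneg
    by (metis norm_ge_zero power2_eq_imp_eq zero_le_mult_iff)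
qed

lemma ipnorm_minus: "ipnorm ip (- u) = ipnorm ip u"
  using ipnorm_sc[of "-1" u] by simp

lemma ipnorm_triangle: "ipnorm ip (u + v) \<le> ipnorm ip u + ipnorm ip v"
proof -
  have "(ipnorm ip (u + v))^2 = (ipnorm ip u)^2 + 2 * Re (ip u v) + (ipnorm ip v)^2"
    using ipnorm_expand[of u 1 v] by simp
  also have "Re (ip u v) \<le> ipnorm ip u * ipnorm ip v"
    using ip_CS[of u v] complex_Re_le_cmod[of "ip u v"] by linarith
  then have "(ipnorm ip u)^2 + 2 * Re (ip u v) + (ipnorm ip v)^2 \<le> (ipnorm ip u + ipnorm ip v)^2"
    by (simp add: power2_sum)
  finally show ?thesis by (rule power2_le_imp_le) (simp add: ipnorm_nonneg add_nonneg_nonneg)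
qed

lemma ipnorm_diff_sym: "ipnorm ip (u - v) = ipnorm ip (v - u)"
  using ipnorm_minus[of "u - v"] by simp

lemma ipnorm_diff_tri: "ipnorm ip (u - w) \<le> ipnorm ip (u - v) + ipnorm ip (v - w)"
  using ipnorm_triangle[of "u - v" "v - w"] by simp

lemma ipnorm_rev_tri: "\<bar>ipnorm ip u - ipnorm ip v\<bar> \<le> ipnorm ip (u - v)"
  using ipnorm_triangle[of "u - v" v] ipnorm_triangle[of "v - u" u] ipnorm_diff_sym[of u v]
  by (simp add: abs_le_iff)

lemma unit_exists: fixes u :: 'h assumes "u \<noteq> 0" shows "\<exists>\<xi>. ipnorm ip \<xi> = 1"
proof -
  have "ipnorm ip u > 0" using assms ipnorm_eq0 ipnorm_nonneg by (metis less_eq_real_def)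
  then have "ipnorm ip (sc (complex_of_real (1 / ipnorm ip u)) u) = 1"
    using ipnorm_sc[of "complex_of_real (1 / ipnorm ip u)" u] by (simp add: norm_divide)
  then show ?thesis by blast
qed

context
  fixes T assumes bT: "bounded_op sc ip T"
begin

lemma T_add: "T (u + v) = T u + T v" and T_sc: "T (sc c u) = sc c (T u)"
  using bT unfolding bounded_op_def by auto

lemma T_zero[simp]: "T 0 = 0"
  using T_sc[of 0 0] by simp

lemma T_minus: "T (- u) = - T u"
  using T_sc[of "-1" u] by simp

lemma T_diff: "T (u - v) = T u - T v"
  using T_add[of u "-v"] T_minus[of v] by simp

lemma opnorm_bdd: "bdd_above {ipnorm ip (T u) | u. ipnorm ip u \<le> 1}"
proof -
  obtain K where K: "\<And>u. ipnorm ip (T u) \<le> K * ipnorm ip u" using bT unfolding bounded_op_def by auto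
  have "ipnorm ip (T u) \<le> max K 0" if "ipnorm ip u \<le> 1" for u
  proof -
    have "K * ipnorm ip u \<le> max K 0 * ipnorm ip u" by (simp add: ipnorm_nonneg mult_right_mono)
    also have "\<dots> \<le> max K 0" using that ipnorm_nonneg[of u] by (simp add: mult_left_le)
    finally show ?thesis using K[of u] by simp
  qed
  then show ?thesis unfolding bdd_above_def by blast
qed

lemma opnorm_ge1: "ipnorm ip u \<le> 1 \<Longrightarrow> ipnorm ip (T u) \<le> opnorm ip T"
  unfolding opnorm_def by (rule cSup_upper[OF _ opnorm_bdd]) blast

lemma opnorm_nonneg: "0 \<le> opnorm ip T"
  using opnorm_ge1[of 0] by simp

lemma opnorm_bound: "ipnorm ip (T u) \<le> opnorm ip T * ipnorm ip u"
proof (cases "u = 0")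
  case True then show ?thesis by simp
next
  case False
  then have n: "ipnorm ip u > 0" using ipnorm_eq0 ipnorm_nonneg by (metis less_eq_real_def)
  define v where "v = sc (complex_of_real (1 / ipnorm ip u)) u"
  have "ipnorm ip v = 1" unfolding v_def using n by (simp add: ipnorm_sc norm_divide)
  then have "ipnorm ip (T v) \<le> opnorm ip T" by (intro opnorm_ge1) simp
  moreover have "ipnorm ip (T v) = ipnorm ip (T u) / ipnorm ip u"
    unfolding v_def T_sc ipnorm_sc using n by (simp add: norm_divide)
  ultimately show ?thesis using n by (simp add: divide_le_eq)
qed

lemma opnorm_le: assumes "\<And>u. ipnorm ip u \<le> 1 \<Longrightarrow> ipnorm ip (T u) \<le> M" shows "opnorm ip T \<le> M"
proof -
  have "ipnorm ip (0::'h) \<le> 1" by simp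
  then show ?thesis unfolding opnorm_def by (intro cSup_least) (use assms in blast)+
qed

lemma quad_le: "Re (ip (T u) u) \<le> opnorm ip T * (ipnorm ip u)^2"
proof -
  have "Re (ip (T u) u) \<le> cmod (ip (T u) u)" by (rule complex_Re_le_cmod)
  also have "\<dots> \<le> ipnorm ip (T u) * ipnorm ip u" by (rule ip_CS)
  also have "\<dots> \<le> opnorm ip T * ipnorm ip u * ipnorm ip u"
    by (rule mult_right_mono[OF opnorm_bound ipnorm_nonneg])
  finally show ?thesis by (simp add: power2_eq_square mult.assoc)
qed

end


lemma small_le: fixes a K :: real assumes "\<And>e. e > 0 \<Longrightarrow> a \<le> K * e" "K \<ge> 0" shows "a \<le> 0"
proof (rule ccontr)
  assume "\<not> a \<le> 0"
  then have a: "a > 0" by simp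
  have "a \<le> K * (a / (2 * (K + 1)))" using assms(1)[of "a / (2 * (K+1))"] a assms(2) by simp
  also have "\<dots> < a" using a assms(2) by (simp add: field_simps) (smt (verit) mult_nonneg_nonneg)
  finally show False by simp
qed

definition sapos where "sapos T \<longleftrightarrow> bounded_op sc ip T \<and> positive_op ip T \<and> is_adjoint ip T T"

context fixes T assumes sT: "sapos T"
begin

lemma sT_b: "bounded_op sc ip T" using sT unfolding sapos_def by blast

lemma sT_adj: "ip (T u) v = ip u (T v)" using sT unfolding sapos_def is_adjoint_def by blast

lemma sT_pos: "Im (ip (T u) u) = 0 \<and> 0 \<le> Re (ip (T u) u)" using sT unfolding sapos_def positive_op_def by blast

lemma sT_form_CS: "(cmod (ip (T u) v))^2 \<le> Re (ip (T u) u) * Re (ip (T v) v)"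
proof (rule form_CS[of "\<lambda>a b. ip (T a) b" sc])
  show "ip (T (u + v)) w = ip (T u) w + ip (T v) w" for u v w by (simp add: T_add[OF sT_b] ip_add)
  show "ip (T (sc c u)) v = c * ip (T u) v" for c u v by (simp add: T_sc[OF sT_b] ip_sc)
  show "ip (T v) u = cnj (ip (T u) v)" for u v using sT_adj[of v u] ip_herm[of "T u" v] by simp
  show "Im (ip (T u) u) = 0 \<and> 0 \<le> Re (ip (T u) u)" for u by (rule sT_pos)
qed

lemma UB: assumes M: "M \<ge> 0" and q: "\<And>u. Re (ip (T u) u) \<le> M * (ipnorm ip u)^2"
  shows "opnorm ip T \<le> M"
proof (rule opnorm_le[OF sT_b])
  fix u assume n1: "ipnorm ip u \<le> 1"
  define N where "N = ipnorm ip (T u)"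
  have N0: "N \<ge> 0" unfolding N_def by (rule ipnorm_nonneg)
  have c1: "cmod (ip (T u) (T u)) = N^2" unfolding N_def ip_self norm_of_real by simp
  have "Re (ip (T u) u) \<le> M * (ipnorm ip u)^2" by (rule q)
  also have "\<dots> \<le> M * 1" using n1 ipnorm_nonneg[of u] M
    by (intro mult_left_mono) (simp_all add: power_le_one)
  finally have a1: "Re (ip (T u) u) \<le> M" by simp
  have a2: "Re (ip (T (T u)) (T u)) \<le> M * N^2" unfolding N_def by (rule q)
  have "(N^2)^2 \<le> Re (ip (T u) u) * Re (ip (T (T u)) (T u))"
    using sT_form_CS[of u "T u"] unfolding c1 .
  also have "\<dots> \<le> M * (M * N^2)"
    using a1 a2 sT_pos[of u] sT_pos[of "T u"] by (intro mult_mono) auto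
  finally have "(N^2)^2 \<le> M * (M * N^2)" .
  then have "N^2 \<le> M^2"
  proof (cases "N = 0")
    case True then show ?thesis by simp
  next
    case False
    then have "N^2 > 0" using N0 by simp
    moreover assume "(N^2)^2 \<le> M * (M * N^2)"
    ultimately show ?thesis by (simp add: power2_eq_square) (metis mult_le_cancel_right_pos mult.assoc mult.commute)
  qed
  then show "ipnorm ip (T u) \<le> M" unfolding N_def using M by (rule power2_le_imp_le)
qed

lemma eigen: assumes u1: "ipnorm ip \<xi> = 1" and e: "Re (ip (T \<xi>) \<xi>) = opnorm ip T"
  shows "T \<xi> = sc (complex_of_real (opnorm ip T)) \<xi>"
proof -
  define c where "c = opnorm ip T"
  have N: "ipnorm ip (T \<xi>) \<le> c" using opnorm_bound[OF sT_b, of \<xi>] u1 unfolding c_def by simp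
  have "(ipnorm ip (T \<xi> + sc (- complex_of_real c) \<xi>))^2
     = (ipnorm ip (T \<xi>))^2 + 2 * Re (cnj (- complex_of_real c) * ip (T \<xi>) \<xi>) + c^2"
    using ipnorm_expand[of "T \<xi>" "- complex_of_real c" \<xi>] u1 by simp
  also have "Re (cnj (- complex_of_real c) * ip (T \<xi>) \<xi>) = - c * c"
    using e unfolding c_def[symmetric] by simp
  finally have "(ipnorm ip (T \<xi> + sc (- complex_of_real c) \<xi>))^2 \<le> 0"
    using N ipnorm_nonneg[of "T \<xi>"] by (simp add: power2_eq_square) (smt (verit) mult_mono)
  then have "ipnorm ip (T \<xi> + sc (- complex_of_real c) \<xi>) = 0"
    using ipnorm_nonneg by (metis le_less_trans power2_less_0 linorder_not_le le_less zero_less_power2 less_le_not_le)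
  then have "T \<xi> + sc (- complex_of_real c) \<xi> = 0" by (simp add: ipnorm_eq0)
  then show ?thesis unfolding c_def by (simp add: add_eq_0_iff)
qed

end


lemma ATT:
  assumes cT: "compact_op sc ip T" and pT: "positive_op ip T" and aT: "is_adjoint ip T T"
    and u0: "(u0::'h) \<noteq> 0"
  shows "\<exists>\<xi>. ipnorm ip \<xi> = 1 \<and> Re (ip (T \<xi>) \<xi>) = opnorm ip T"
proof -
  have bT: "bounded_op sc ip T" using cT unfolding compact_op_def by blast
  have sT: "sapos T" unfolding sapos_def using bT pT aT by blast
  define c where "c = opnorm ip T"
  have c0: "c \<ge> 0" unfolding c_def by (rule opnorm_nonneg[OF bT])
  show ?thesis
  proof (cases "c = 0")
    case True
    obtain \<xi> where \<xi>: "ipnorm ip \<xi> = 1" using unit_exists[OF u0] by blast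
    have "Re (ip (T \<xi>) \<xi>) \<le> 0" using quad_le[OF bT, of \<xi>] True c_def by simp
    with sT_pos[OF sT, of \<xi>] show ?thesis using \<xi> True c_def by (intro exI[of _ \<xi>]) auto
  next
    case False
    then have cpos: "c > 0" using c0 by simp
    have approx: "\<exists>\<eta>. ipnorm ip \<eta> = 1 \<and> c - e < Re (ip (T \<eta>) \<eta>)" if e: "0 < e" "e < c" for e
    proof (rule ccontr)
      assume "\<not> ?thesis"
      then have nb: "\<And>\<eta>. ipnorm ip \<eta> = 1 \<Longrightarrow> Re (ip (T \<eta>) \<eta>) \<le> c - e" by force
      have "Re (ip (T u) u) \<le> (c - e) * (ipnorm ip u)^2" for u
      proof (cases "u = 0")
        case True then show ?thesis by (simp add: T_zero[OF bT])
      next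
        case False
        then have n: "ipnorm ip u > 0" using ipnorm_eq0 ipnorm_nonneg by (metis less_eq_real_def)
        define v where "v = sc (complex_of_real (1 / ipnorm ip u)) u"
        have v1: "ipnorm ip v = 1" unfolding v_def using n by (simp add: ipnorm_sc norm_divide)
        have "ip (T v) v = complex_of_real (1 / ipnorm ip u) * complex_of_real (1 / ipnorm ip u) * ip (T u) u"
          unfolding v_def by (simp add: T_sc[OF bT] ip_sc ip_sc_right)
        then have "Re (ip (T v) v) = Re (ip (T u) u) / (ipnorm ip u)^2" by (simp add: power2_eq_square)
        with nb[OF v1] n show ?thesis by (simp add: divide_le_eq)
      qed
      then have "c \<le> c - e" unfolding c_def by (intro UB[OF sT]) (use e c_def in auto)
      with e show False by simp
    qed
    have "\<forall>n::nat. \<exists>\<eta>. ipnorm ip \<eta> = 1 \<and> c - c / (real n + 2) < Re (ip (T \<eta>) \<eta>)"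
    proof
      fix n :: nat
      show "\<exists>\<eta>. ipnorm ip \<eta> = 1 \<and> c - c / (real n + 2) < Re (ip (T \<eta>) \<eta>)"
        by (rule approx) (use cpos in \<open>auto simp: field_simps add_pos_nonneg\<close>)
    qed
    then obtain \<eta> where \<eta>1: "\<And>n. ipnorm ip (\<eta> n) = 1"
      and \<eta>2: "\<And>n. c - c / (real n + 2) < Re (ip (T (\<eta> n)) (\<eta> n))"
      by metis
    have "\<exists>B. \<forall>n. ipnorm ip (\<eta> n) \<le> B" using \<eta>1 by (metis order_refl)
    then obtain r l where r: "strict_mono r" and conv: "converges_wrt (ipnorm ip) (\<lambda>n. T (\<eta> (r n))) l"
      using cT unfolding compact_op_def by blast
    define \<zeta> where "\<zeta> n = \<eta> (r n)" for n
    define C where "C = complex_of_real c"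
    have cmC: "cmod C = c" unfolding C_def using c0 by simp
    have Dsq: "(ipnorm ip (T (\<zeta> n) - sc C (\<zeta> n)))^2 \<le> 2 * c^2 / (real n + 2)" for n
    proof -
      define N where "N = ipnorm ip (T (\<zeta> n))"
      define Q where "Q = Re (ip (T (\<zeta> n)) (\<zeta> n))"
      have "T (\<zeta> n) - sc C (\<zeta> n) = T (\<zeta> n) + sc (- C) (\<zeta> n)" by simp
      then have "(ipnorm ip (T (\<zeta> n) - sc C (\<zeta> n)))^2 = N^2 + 2 * Re (cnj (-C) * ip (T (\<zeta> n)) (\<zeta> n)) + c^2"
        using ipnorm_expand[of "T (\<zeta> n)" "-C" "\<zeta> n"] \<eta>1 cmC unfolding \<zeta>_def N_def by simp
      also have "Re (cnj (-C) * ip (T (\<zeta> n)) (\<zeta> n)) = - c * Q" unfolding C_def Q_def by simp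
      finally have eq: "(ipnorm ip (T (\<zeta> n) - sc C (\<zeta> n)))^2 = N^2 - 2 * c * Q + c^2" by simp
      have N: "N \<le> c" using opnorm_bound[OF bT, of "\<zeta> n"] \<eta>1 unfolding \<zeta>_def c_def N_def by simp
      have N0: "N \<ge> 0" unfolding N_def by (rule ipnorm_nonneg)
      have N2: "N^2 \<le> c^2" using N N0 by (simp add: power_mono)
      have rn: "real n \<le> real (r n)" using seq_suble[OF r, of n] by simp
      have "c / (real (r n) + 2) \<le> c / (real n + 2)" using rn cpos by (simp add: frac_le)
      then have Q: "c - c / (real n + 2) < Q" using \<eta>2[of "r n"] unfolding Q_def \<zeta>_def by simp
      have "N^2 - 2 * c * Q + c^2 \<le> c^2 - 2 * c * (c - c / (real n + 2)) + c^2"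
      proof -
        have "2 * c * (c - c / (real n + 2)) \<le> 2 * c * Q" using Q cpos by (intro mult_left_mono) auto
        then show ?thesis using N2 by linarith
      qed
      also have "\<dots> = 2 * c^2 / (real n + 2)" by (simp add: field_simps power2_eq_square)
      finally show ?thesis using eq by simp
    qed
    have small: "\<exists>n. ipnorm ip (T (\<zeta> n) - l) < \<epsilon> \<and> ipnorm ip (T (\<zeta> n) - sc C (\<zeta> n)) < \<epsilon>"
      if ep: "\<epsilon> > 0" for \<epsilon>
    proof -
      obtain N where N: "\<forall>k\<ge>N. ipnorm ip (T (\<zeta> k) - l) < \<epsilon>"
        using conv ep unfolding converges_wrt_def \<zeta>_def by blast
      obtain m :: nat where m: "2 * c^2 / \<epsilon>^2 < real m" using reals_Archimedean2 by blast
      define k where "k = max N m"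
      have k1: "k \<ge> N" unfolding k_def by simp
      have "2 * c^2 / \<epsilon>^2 < real k + 2" using m unfolding k_def by linarith
      then have "2 * c^2 < \<epsilon>^2 * (real k + 2)" using ep by (simp add: divide_less_eq mult.commute)
      then have "2 * c^2 / (real k + 2) < \<epsilon>^2" by (simp add: divide_less_eq)
      then have "(ipnorm ip (T (\<zeta> k) - sc C (\<zeta> k)))^2 < \<epsilon>^2" using Dsq[of k] by linarith
      then have "ipnorm ip (T (\<zeta> k) - sc C (\<zeta> k)) < \<epsilon>" using ep by (simp add: power_less_imp_less_base)
      then show ?thesis using N k1 by blast
    qed
    have tri: "ipnorm ip (T l - sc C l) \<le> 3 * c * \<epsilon> \<and> \<bar>ipnorm ip l - c\<bar> \<le> 2 * \<epsilon>" if ep: "\<epsilon> > 0" for \<epsilon>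
    proof -
      obtain n where X: "ipnorm ip (T (\<zeta> n) - l) < \<epsilon>" and D: "ipnorm ip (T (\<zeta> n) - sc C (\<zeta> n)) < \<epsilon>"
        using small ep by blast
      have a: "ipnorm ip (l - sc C (\<zeta> n)) \<le> 2 * \<epsilon>"
        using ipnorm_diff_tri[of l "sc C (\<zeta> n)" "T (\<zeta> n)"] ipnorm_diff_sym[of l "T (\<zeta> n)"] X D by simp
      have "ipnorm ip (T l - T (sc C (\<zeta> n))) = ipnorm ip (T (l - sc C (\<zeta> n)))" by (simp add: T_diff[OF bT])
      also have "\<dots> \<le> c * ipnorm ip (l - sc C (\<zeta> n))" using opnorm_bound[OF bT] unfolding c_def by blast
      also have "\<dots> \<le> c * (2 * \<epsilon>)" using a c0 by (rule mult_left_mono)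
      finally have b1: "ipnorm ip (T l - T (sc C (\<zeta> n))) \<le> c * (2 * \<epsilon>)" .
      have "T (sc C (\<zeta> n)) - sc C l = sc C (T (\<zeta> n) - l)" by (simp add: T_sc[OF bT] M.scale_right_diff_distrib)
      then have "ipnorm ip (T (sc C (\<zeta> n)) - sc C l) = c * ipnorm ip (T (\<zeta> n) - l)" by (simp add: ipnorm_sc cmC)
      also have "\<dots> \<le> c * \<epsilon>" using X c0 by (simp add: mult_left_mono)
      finally have b2: "ipnorm ip (T (sc C (\<zeta> n)) - sc C l) \<le> c * \<epsilon>" .
      have "ipnorm ip (T l - sc C l) \<le> ipnorm ip (T l - T (sc C (\<zeta> n))) + ipnorm ip (T (sc C (\<zeta> n)) - sc C l)"
        by (rule ipnorm_diff_tri)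
      also have "\<dots> \<le> 3 * c * \<epsilon>" using b1 b2 by simp
      finally have r1: "ipnorm ip (T l - sc C l) \<le> 3 * c * \<epsilon>" .
      have "ipnorm ip (sc C (\<zeta> n)) = c" using \<eta>1 unfolding \<zeta>_def by (simp add: ipnorm_sc cmC)
      then have "\<bar>ipnorm ip l - c\<bar> \<le> ipnorm ip (l - sc C (\<zeta> n))" using ipnorm_rev_tri[of l "sc C (\<zeta> n)"] by simp
      with a r1 show ?thesis by simp
    qed
    have "ipnorm ip (T l - sc C l) \<le> 0"
      by (rule small_le[of _ "3 * c"]) (use tri c0 in \<open>auto simp: mult.assoc\<close>)
    then have "T l - sc C l = 0" using ipnorm_nonneg ipnorm_eq0 by (metis order.antisym)
    then have e1: "T l = sc C l" by simp
    have "\<bar>ipnorm ip l - c\<bar> \<le> 0"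
      by (rule small_le[of _ 2]) (use tri in auto)
    then have e2: "ipnorm ip l = c" by simp
    define \<xi> where "\<xi> = sc (complex_of_real (1 / c)) l"
    have x1: "ipnorm ip \<xi> = 1" unfolding \<xi>_def using e2 cpos by (simp add: ipnorm_sc norm_divide)
    have "T \<xi> = l" unfolding \<xi>_def using cpos by (simp add: T_sc[OF bT] e1 C_def)
    then have "ip (T \<xi>) \<xi> = complex_of_real (1 / c) * ip l l" unfolding \<xi>_def by (simp add: ip_sc_right)
    then have "Re (ip (T \<xi>) \<xi>) = c" using e2 cpos by (simp add: ip_self power2_eq_square)
    then show ?thesis using x1 unfolding c_def by blast
  qed
qed

end



locale kh = phs sc ip for sc :: "complex \<Rightarrow> 'h::ab_group_add \<Rightarrow> 'h" and ip +
  fixes scE :: "complex \<Rightarrow> 'e::ab_group_add \<Rightarrow> 'e" and act :: "('h \<Rightarrow> 'h) \<Rightarrow> 'e \<Rightarrow> 'e"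
    and ipE :: "'e \<Rightarrow> 'e \<Rightarrow> ('h \<Rightarrow> 'h)"
  assumes kh: "hilbert_KH_module sc ip scE act ipE"
begin

lemma E_vs: "vector_space scE" using kh unfolding hilbert_KH_module_def by blast
lemma cK: "compact_op sc ip (ipE x y)" using kh unfolding hilbert_KH_module_def by blast
lemma addE: "ipE (x + y) z = (\<lambda>u. ipE x z u + ipE y z u)" using kh unfolding hilbert_KH_module_def by blast
lemma scEE: "ipE (scE c x) y = (\<lambda>u. sc c (ipE x y u))" using kh unfolding hilbert_KH_module_def by blast
lemma actE: "compact_op sc ip a \<Longrightarrow> ipE (act a x) y = a \<circ> ipE x y" using kh unfolding hilbert_KH_module_def by blast
lemma adjE: "ip (ipE x y u) v = ip u (ipE y x v)" using kh unfolding hilbert_KH_module_def is_adjoint_def by blast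
lemma posE: "positive_op ip (ipE x x)" using kh unfolding hilbert_KH_module_def by blast
lemma zeroE: "ipE x x = (\<lambda>u. 0) \<longleftrightarrow> x = 0" using kh unfolding hilbert_KH_module_def by blast

lemma bE: "bounded_op sc ip (ipE x y)" using cK unfolding compact_op_def by blast

lemma saE: "sapos (ipE x x)" unfolding sapos_def is_adjoint_def using bE posE adjE by blast

sublocale ME: module scE using E_vs module_iff_vector_space by blast

definition B where "B \<xi> a b = ip (ipE a b \<xi>) \<xi>"

lemma B_add: "B \<xi> (u + v) w = B \<xi> u w + B \<xi> v w" unfolding B_def addE by (simp add: ip_add)
lemma B_sc: "B \<xi> (scE c u) v = c * B \<xi> u v" unfolding B_def scEE by (simp add: ip_sc)
lemma B_herm: "B \<xi> v u = cnj (B \<xi> u v)" unfolding B_def using adjE[of u v \<xi> \<xi>] ip_herm[of \<xi> "ipE v u \<xi>"] by simp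
lemma B_pos: "Im (B \<xi> u u) = 0 \<and> 0 \<le> Re (B \<xi> u u)" unfolding B_def using posE unfolding positive_op_def by blast

lemma B_CS: "(cmod (B \<xi> u v))^2 \<le> Re (B \<xi> u u) * Re (B \<xi> v v)"
  by (rule form_CS[of "B \<xi>" scE, OF B_add B_sc B_herm B_pos])

lemma B_expand: "Re (B \<xi> (u + scE c v) (u + scE c v)) = Re (B \<xi> u u) + 2 * Re (cnj c * B \<xi> u v) + (cmod c)^2 * Re (B \<xi> v v)"
  by (rule form_expand[of "B \<xi>" scE, OF B_add B_sc B_herm])

abbreviation mn where "mn x \<equiv> module_norm ip ipE x"

lemma mn_nonneg: "mn x \<ge> 0" unfolding module_norm_def using opnorm_nonneg[OF bE, of x x] by simp

lemma mn_sq: "(mn x)^2 = opnorm ip (ipE x x)"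
  unfolding module_norm_def using opnorm_nonneg[OF bE] by simp

lemma B_le: "Re (B u x x) \<le> (mn x)^2 * (ipnorm ip u)^2"
  unfolding B_def mn_sq by (rule quad_le[OF bE])

lemma mn_zero: "mn 0 = 0"
proof -
  have "opnorm ip (ipE 0 0) \<le> 0" using zeroE[of 0] by (intro opnorm_le[OF bE]) simp
  then show ?thesis using opnorm_nonneg[OF bE, of 0 0] unfolding module_norm_def by simp
qed

lemma mn_pos: assumes "x \<noteq> 0" shows "mn x > 0"
proof (rule ccontr)
  assume "\<not> mn x > 0"
  then have "mn x = 0" using mn_nonneg[of x] by simp
  then have o: "opnorm ip (ipE x x) = 0" using mn_sq[of x] by simp
  have "ipE x x u = 0" for u
  proof -
    have "ipnorm ip (ipE x x u) \<le> 0" using opnorm_bound[OF bE, of x x u] o by simp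
    then show ?thesis using ipnorm_nonneg ipnorm_eq0 by (metis order.antisym)
  qed
  then have "ipE x x = (\<lambda>u. 0)" by blast
  then show False using assms zeroE by blast
qed

lemma zbound:
  assumes l: "cmod l = 1"
  shows "Re (B u (x + scE l y) (x + scE l y)) \<le> (mn x + mn y)^2 * (ipnorm ip u)^2"
proof -
  define P where "P = Re (B u x x)"
  define R where "R = Re (B u y y)"
  define n where "n = (ipnorm ip u)^2"
  have P: "P \<le> (mn x)^2 * n" "P \<ge> 0" unfolding P_def n_def using B_le B_pos by auto
  have R: "R \<le> (mn y)^2 * n" "R \<ge> 0" unfolding R_def n_def using B_le B_pos by auto
  have n0: "n \<ge> 0" unfolding n_def by simp
  have "(cmod (B u x y))^2 \<le> P * R" unfolding P_def R_def by (rule B_CS)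
  also have "\<dots> \<le> ((mn x)^2 * n) * ((mn y)^2 * n)" using P R by (intro mult_mono) auto
  also have "\<dots> = (mn x * mn y * n)^2" by (simp add: power2_eq_square algebra_simps)
  finally have "cmod (B u x y) \<le> mn x * mn y * n"
    by (rule power2_le_imp_le) (simp add: mn_nonneg n0)
  moreover have "Re (cnj l * B u x y) \<le> cmod (B u x y)"
    using complex_Re_le_cmod[of "cnj l * B u x y"] l by (simp add: norm_mult)
  ultimately have "Re (cnj l * B u x y) \<le> mn x * mn y * n" by simp
  then have "Re (B u (x + scE l y) (x + scE l y)) \<le> (mn x)^2 * n + 2 * (mn x * mn y * n) + (mn y)^2 * n"
    using B_expand[of u x l y] P R l unfolding P_def R_def by simp
  also have "\<dots> = (mn x + mn y)^2 * n" by (simp add: power2_eq_square algebra_simps)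
  finally show ?thesis unfolding n_def .
qed

lemma mn_z_le: assumes l: "cmod l = 1" shows "mn (x + scE l y) \<le> mn x + mn y"
proof -
  have "opnorm ip (ipE (x + scE l y) (x + scE l y)) \<le> (mn x + mn y)^2"
    using zbound[OF l] unfolding B_def by (intro UB[OF saE]) auto
  then have "(mn (x + scE l y))^2 \<le> (mn x + mn y)^2" using mn_sq by simp
  then show ?thesis by (rule power2_le_imp_le) (simp add: mn_nonneg add_nonneg_nonneg)
qed


lemma dir1:
  assumes u0: "(u0::'h) \<noteq> 0" and l: "cmod l = 1" and eq: "mn (x + scE l y) = mn x + mn y"
  shows "\<exists>\<xi>. ipnorm ip \<xi> = 1 \<and> cmod (ip (ipE x x (ipE x y \<xi>)) \<xi>) = mn x ^ 3 * mn y"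
proof -
  define z where "z = x + scE l y"
  have adz: "is_adjoint ip (ipE z z) (ipE z z)" unfolding is_adjoint_def using adjE by blast
  obtain \<xi> where \<xi>1: "ipnorm ip \<xi> = 1" and \<xi>2: "Re (ip (ipE z z \<xi>) \<xi>) = opnorm ip (ipE z z)"
    using ATT[OF cK posE adz u0] by blast
  define a where "a = mn x"
  define b where "b = mn y"
  define P where "P = Re (B \<xi> x x)"
  define R where "R = Re (B \<xi> y y)"
  define t where "t = cmod (B \<xi> x y)"
  have a0: "a \<ge> 0" and b0: "b \<ge> 0" unfolding a_def b_def by (simp_all add: mn_nonneg)
  have Pa: "P \<le> a^2" "P \<ge> 0" unfolding P_def a_def using B_le[of \<xi> x] \<xi>1 B_pos by auto
  have Rb: "R \<le> b^2" "R \<ge> 0" unfolding R_def b_def using B_le[of \<xi> y] \<xi>1 B_pos by auto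
  have tPR: "t^2 \<le> P * R" unfolding t_def P_def R_def by (rule B_CS)
  have "Re (B \<xi> z z) = (a + b)^2" unfolding B_def using \<xi>2 mn_sq[of z] eq unfolding z_def a_def b_def by simp
  then have ex: "(a + b)^2 = P + 2 * Re (cnj l * B \<xi> x y) + R"
    using B_expand[of \<xi> x l y] l unfolding z_def P_def R_def by simp
  have "Re (cnj l * B \<xi> x y) \<le> t"
    using complex_Re_le_cmod[of "cnj l * B \<xi> x y"] l unfolding t_def by (simp add: norm_mult)
  with ex have ex2: "(a + b)^2 \<le> P + 2 * t + R" by simp
  define p where "p = sqrt P"
  define q where "q = sqrt R"
  have pP: "p^2 = P" "p \<ge> 0" unfolding p_def using Pa by simp_all
  have qR: "q^2 = R" "q \<ge> 0" unfolding q_def using Rb by simp_all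
  have pa: "p \<le> a" by (rule power2_le_imp_le) (use Pa(1) pP(1) a0 in auto)
  have qb: "q \<le> b" by (rule power2_le_imp_le) (use Rb(1) qR(1) b0 in auto)
  have t0: "t \<ge> 0" unfolding t_def by simp
  have tpq: "t \<le> p * q"
  proof (rule power2_le_imp_le)
    show "t^2 \<le> (p * q)^2" using tPR pP(1) qR(1) by (simp add: power_mult_distrib)
    show "0 \<le> p * q" using pP(2) qR(2) by simp
  qed
  have "(a + b)^2 \<le> (p + q)^2" using ex2 tpq pP(1) qR(1) unfolding power2_sum by linarith
  then have "a + b \<le> p + q" by (rule power2_le_imp_le) (use pP(2) qR(2) in simp)
  then have pa2: "p = a" and qb2: "q = b" using pa qb by linarith+
  then have Pa2: "P = a^2" and Rb2: "R = b^2" using pP qR by simp_all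
  have "t \<ge> a * b" using ex2 Pa2 Rb2 unfolding power2_sum by linarith
  moreover have "t \<le> a * b" using tpq pa2 qb2 by simp
  ultimately have tab: "t = a * b" by simp
  have "Re (ip (ipE x x \<xi>) \<xi>) = opnorm ip (ipE x x)" using Pa2 mn_sq[of x] unfolding P_def B_def a_def by simp
  then have eig: "ipE x x \<xi> = sc (complex_of_real (a^2)) \<xi>"
    using eigen[OF saE \<xi>1] mn_sq[of x] unfolding a_def by simp
  have "ip (ipE x x (ipE x y \<xi>)) \<xi> = ip (ipE x y \<xi>) (ipE x x \<xi>)" by (rule sT_adj[OF saE])
  also have "\<dots> = complex_of_real (a^2) * B \<xi> x y" unfolding eig B_def by (simp add: ip_sc_right)
  finally have "cmod (ip (ipE x x (ipE x y \<xi>)) \<xi>) = a^2 * t" unfolding t_def by (simp add: norm_mult norm_power)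
  also have "\<dots> = a^3 * b" using tab by (simp add: power2_eq_square power3_eq_cube)
  finally show ?thesis using \<xi>1 unfolding a_def b_def by blast
qed


lemma dir2:
  assumes \<xi>1: "ipnorm ip \<xi> = 1" and V: "cmod (ip (ipE x x (ipE x y \<xi>)) \<xi>) = mn x ^ 3 * mn y"
  shows "norm_parallel scE mn x y"
proof (cases "x = 0 \<or> y = 0")
  case True
  then show ?thesis unfolding norm_parallel_def
    by (intro exI[of _ 1]) (auto simp: mn_zero)
next
  case False
  then have x0: "x \<noteq> 0" and y0: "y \<noteq> 0" by auto
  define a where "a = mn x"
  define b where "b = mn y"
  have a0: "a > 0" unfolding a_def using mn_pos[OF x0] .
  have b0: "b > 0" unfolding b_def using mn_pos[OF y0] .
  define A where "A = ipE x x"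
  have oA: "opnorm ip A = a^2" unfolding A_def a_def by (simp add: mn_sq)
  have sA: "sapos A" unfolding A_def by (rule saE)
  have bA: "bounded_op sc ip A" unfolding A_def by (rule bE)
  define w where "w = act A x"
  have wy: "ipE w y = A \<circ> ipE x y" unfolding w_def A_def by (rule actE[OF cK])
  have wx: "ipE w x = A \<circ> A" unfolding w_def A_def by (rule actE[OF cK])
  have ww0: "ipE w w = A \<circ> ipE x w" unfolding w_def A_def by (rule actE[OF cK])
  have Veq: "ip (A (ipE x y \<xi>)) \<xi> = B \<xi> w y" unfolding B_def wy by simp
  have "B \<xi> w w = ip (A (ipE x w \<xi>)) \<xi>" unfolding B_def ww0 by simp
  also have "\<dots> = ip (ipE x w \<xi>) (A \<xi>)" by (rule sT_adj[OF sA])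
  also have "\<dots> = ip \<xi> (ipE w x (A \<xi>))" by (rule adjE)
  also have "\<dots> = ip \<xi> (A (A (A \<xi>)))" unfolding wx by simp
  also have "\<dots> = ip (A \<xi>) (A (A \<xi>))" by (rule sT_adj[OF sA, symmetric])
  finally have ww: "B \<xi> w w = ip (A \<xi>) (A (A \<xi>))" .
  define N where "N = ipnorm ip (A \<xi>)"
  have N0: "N \<ge> 0" unfolding N_def by (rule ipnorm_nonneg)
  have Na: "N \<le> a^2" unfolding N_def using opnorm_bound[OF bA, of \<xi>] \<xi>1 oA by simp
  have "Re (B \<xi> w w) \<le> cmod (B \<xi> w w)" by (rule complex_Re_le_cmod)
  also have "\<dots> \<le> N * ipnorm ip (A (A \<xi>))" unfolding ww N_def by (rule ip_CS)
  also have "\<dots> \<le> N * (a^2 * N)" using opnorm_bound[OF bA, of "A \<xi>"] oA N0 unfolding N_def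
    by (intro mult_left_mono) auto
  finally have Bww: "Re (B \<xi> w w) \<le> a^2 * N^2" by (simp add: power2_eq_square algebra_simps)
  define R where "R = Re (B \<xi> y y)"
  have Rb: "R \<le> b^2" "R \<ge> 0" unfolding R_def b_def using B_le[of \<xi> y] \<xi>1 B_pos by auto
  have "(a^3 * b)^2 = (cmod (B \<xi> w y))^2" using V Veq unfolding A_def a_def b_def by simp
  also have "\<dots> \<le> Re (B \<xi> w w) * R" unfolding R_def by (rule B_CS)
  also have "\<dots> \<le> (a^2 * N^2) * R" using Bww Rb(2) by (rule mult_right_mono)
  finally have k1: "(a^3 * b)^2 \<le> a^2 * N^2 * R" .
  have e6: "a^2 * (a^4 * b^2) = (a^3 * b)^2" by (simp add: eval_nat_numeral algebra_simps)
  have "a^2 * (a^4 * b^2) \<le> a^2 * (N^2 * R)" using k1 e6 by (metis mult.assoc)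
  then have k2: "a^4 * b^2 \<le> N^2 * R" by (rule mult_left_le_imp_le) (use a0 in simp)
  have N2: "N^2 \<le> a^4" using Na N0 power_mono[OF Na N0, of 2] by (simp add: power_mult[symmetric])
  have "N^2 * R \<le> a^4 * R" using N2 Rb(2) by (rule mult_right_mono)
  with k2 have "a^4 * b^2 \<le> a^4 * R" by simp
  then have "b^2 \<le> R" using a0 by simp
  then have Rb2: "R = b^2" using Rb by simp
  with k2 have "a^4 * b^2 \<le> N^2 * b^2" by simp
  then have "a^4 \<le> N^2" using b0 by simp
  then have N4: "N^2 = a^4" using N2 by simp
  then have Nsq: "N = a^2" using N0 by (metis power2_eq_imp_eq power_mult[symmetric] zero_le_power2 numeral_times_numeral semiring_norm(12) semiring_norm(13) numeral_One mult.right_neutral num_double)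
  define Q where "Q = Re (ip (A \<xi>) \<xi>)"
  have Qa: "Q \<le> a^2" unfolding Q_def using quad_le[OF bA, of \<xi>] \<xi>1 oA by simp
  have c1: "cmod (ip (A \<xi>) (A \<xi>)) = N^2" unfolding N_def ip_self norm_of_real by simp
  have "(N^2)^2 \<le> Q * Re (ip (A (A \<xi>)) (A \<xi>))" unfolding Q_def
    using sT_form_CS[OF sA, of \<xi> "A \<xi>"] unfolding c1 .
  also have "\<dots> \<le> Q * (a^2 * N^2)"
    using quad_le[OF bA, of "A \<xi>"] oA sT_pos[OF sA, of \<xi>] unfolding Q_def N_def
    by (intro mult_left_mono) auto
  finally have F: "(N^2)^2 \<le> Q * (a^2 * N^2)" .
  define s where "s = a^2"
  have s0: "s > 0" unfolding s_def using a0 by simp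
  have e1: "(N^2)^2 = s * s^3" unfolding Nsq s_def by (simp add: eval_nat_numeral)
  have e2: "Q * (a^2 * N^2) = Q * s^3" unfolding Nsq s_def by (simp add: eval_nat_numeral)
  have "s * s^3 \<le> Q * s^3" using F e1 e2 by simp
  then have "a^2 \<le> Q" unfolding s_def[symmetric] by (rule mult_right_le_imp_le) (use s0 in simp)
  then have Q2: "Q = a^2" using Qa by simp
  have eig: "A \<xi> = sc (complex_of_real (a^2)) \<xi>"
    using eigen[OF sA \<xi>1] Q2 oA unfolding Q_def by simp
  have "ip (A (ipE x y \<xi>)) \<xi> = ip (ipE x y \<xi>) (A \<xi>)" by (rule sT_adj[OF sA])
  also have "\<dots> = complex_of_real (a^2) * B \<xi> x y" unfolding eig B_def by (simp add: ip_sc_right)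
  finally have cv: "cmod (ip (A (ipE x y \<xi>)) \<xi>) = a^2 * cmod (B \<xi> x y)" by (simp add: norm_mult norm_power)
  have V': "cmod (ip (A (ipE x y \<xi>)) \<xi>) = a^3 * b" using V unfolding A_def a_def b_def .
  have e3: "a^3 * b = a^2 * (a * b)" by (simp add: eval_nat_numeral)
  have "a^2 * cmod (B \<xi> x y) = a^2 * (a * b)" using cv V' e3 by linarith
  then have tab: "cmod (B \<xi> x y) = a * b" using a0 by simp
  define l where "l = B \<xi> x y / complex_of_real (cmod (B \<xi> x y))"
  have tpos: "cmod (B \<xi> x y) > 0" using tab a0 b0 by simp
  have l1: "cmod l = 1" unfolding l_def using tpos by (simp add: norm_divide)
  have "cnj l * B \<xi> x y = complex_of_real ((cmod (B \<xi> x y))^2) / complex_of_real (cmod (B \<xi> x y))"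
    unfolding l_def complex_norm_square by (simp add: mult.commute)
  also have "\<dots> = complex_of_real (cmod (B \<xi> x y))" using tpos by (simp add: power2_eq_square)
  finally have lB: "Re (cnj l * B \<xi> x y) = a * b" using tab by simp
  define z where "z = x + scE l y"
  have P: "Re (B \<xi> x x) = a^2" using Q2 unfolding Q_def A_def B_def .
  have "Re (B \<xi> z z) = a^2 + 2 * (a * b) + b^2"
    using B_expand[of \<xi> x l y] l1 lB P Rb2 unfolding z_def R_def by simp
  also have "\<dots> = (a + b)^2" by (simp add: power2_sum)
  finally have "(a + b)^2 \<le> (mn z)^2" using B_le[of \<xi> z] \<xi>1 by simp
  then have "a + b \<le> mn z" by (rule power2_le_imp_le) (simp add: mn_nonneg)
  moreover have "mn z \<le> a + b" unfolding z_def a_def b_def by (rule mn_z_le[OF l1])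
  ultimately have "mn (x + scE l y) = mn x + mn y" unfolding z_def a_def b_def by simp
  then show ?thesis unfolding norm_parallel_def using l1 by blast
qed

end


theorem theorem2p1:
  fixes scH :: "complex \<Rightarrow> 'h::ab_group_add \<Rightarrow> 'h"
    and ip :: "'h \<Rightarrow> 'h \<Rightarrow> complex"
    and scE :: "complex \<Rightarrow> 'e::ab_group_add \<Rightarrow> 'e"
    and act :: "('h \<Rightarrow> 'h) \<Rightarrow> 'e \<Rightarrow> 'e"
    and ipE :: "'e \<Rightarrow> 'e \<Rightarrow> ('h \<Rightarrow> 'h)"
    and x y :: 'e
  assumes "hilbert_space scH ip"
    and "\<exists>u::'h. u \<noteq> 0"
    and "hilbert_KH_module scH ip scE act ipE"
  shows "norm_parallel scE (module_norm ip ipE) x y \<longleftrightarrow>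
    (\<exists>\<xi>. ipnorm ip \<xi> = 1 \<and>
       cmod (ip (ipE x x (ipE x y \<xi>)) \<xi>) =
         module_norm ip ipE x ^ 3 * module_norm ip ipE y)"
proof -
  have ph: "pre_hilbert_space scH ip" using assms(1) unfolding hilbert_space_def by blast
  interpret K: kh scH ip scE act ipE
    unfolding kh_def kh_axioms_def phs_def using ph assms(3) by blast
  obtain u0 :: 'h where u0: "u0 \<noteq> 0" using assms(2) by blast
  show ?thesis
  proof
    assume "norm_parallel scE (module_norm ip ipE) x y"
    then obtain t where t1: "cmod t = 1"
      and t2: "module_norm ip ipE (x + scE t y) = module_norm ip ipE x + module_norm ip ipE y"
      unfolding norm_parallel_def by blast
    show "\<exists>\<xi>. ipnorm ip \<xi> = 1 \<and>
       cmod (ip (ipE x x (ipE x y \<xi>)) \<xi>) = module_norm ip ipE x ^ 3 * module_norm ip ipE y"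
      by (rule K.dir1[OF u0 t1 t2])
  next
    assume "\<exists>\<xi>. ipnorm ip \<xi> = 1 \<and>
       cmod (ip (ipE x x (ipE x y \<xi>)) \<xi>) = module_norm ip ipE x ^ 3 * module_norm ip ipE y"
    then obtain \<xi> where a: "ipnorm ip \<xi> = 1"
      and b: "cmod (ip (ipE x x (ipE x y \<xi>)) \<xi>) = module_norm ip ipE x ^ 3 * module_norm ip ipE y"
      by blast
    show "norm_parallel scE (module_norm ip ipE) x y" by (rule K.dir2[OF a b])
  qed
qed

end
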